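(* Let $G=(V,E,w)$ be a connected undirected graph with positive integer edge weights, Laplacian $\mathcal L=B^TWB$ ($W=\mathrm{diag}(w)$) and Moore–Penrose pseudoinverse $\mathcal L^+$. Let $U\subseteq V$ be such that the induced subgraph $G(U)=(U,E(U))$ has at least one edge and conductance $\Phi(G(U))>0$. Then for every edge $(s,t)\in E$, letting $v=\mathcal L^+(\mathbb{1}_s-\mathbb{1}_t)$, $$\sum_{\{a,b\}\in E(U)}w_{ab}\,|v(a)-v(b)|\le\frac{8\ln\big(\mathrm{vol}(G(U))\big)}{\Phi(G(U))^2}.$$
   Context: $E(U)$ is the set of edges of $G$ with both endpoints in $U$. In $G(U)$, the degree of $a$ is $d(a)=\sum_{\{a,b\}\in E(U)}w_{ab}$, $\mathrm{vol}(S)=\sum_{a\in S}d(a)$, $\mathrm{vol}(G(U))=\mathrm{vol}(U)$, and the conductance is $\Phi(G(U))=\min_{\emptyset\ne S\subsetneq U}\frac{w(\partial_{G(U)}(S))}{\min\{\mathrm{vol}(S),\mathrm{vol}(U\setminus S)\}}$, where $\partial_{G(U)}(S)$ is the set of edges of $E(U)$ with exactly one endpoint in $S$ and $w(F)=\sum_{e\in F}w_e$. *)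

theory Defs
  imports "HOL-Analysis.Analysis"
begin

text \<open>A weighted undirected graph on the finite vertex type 'a is given by a
symmetric weight function w :: 'a => 'a => nat with no loops; {a,b} is an edge
iff w a b > 0, and then w a b is its (positive integer) weight.\<close>

definition wgraph :: "('a \<Rightarrow> 'a \<Rightarrow> nat) \<Rightarrow> bool" where
  "wgraph w \<longleftrightarrow> (\<forall>a b. w a b = w b a) \<and> (\<forall>a. w a a = 0)"

definition edge_rel :: "('a \<Rightarrow> 'a \<Rightarrow> nat) \<Rightarrow> ('a \<times> 'a) set" where
  "edge_rel w = {(a, b). 0 < w a b}"

definition connected_graph :: "('a \<Rightarrow> 'a \<Rightarrow> nat) \<Rightarrow> bool" where
  "connected_graph w \<longleftrightarrow> (\<forall>a b. (a, b) \<in> (edge_rel w)\<^sup>*)"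

definition laplacian :: "('a::finite \<Rightarrow> 'a \<Rightarrow> nat) \<Rightarrow> real^'a^'a" where
  "laplacian w = (\<chi> a b. if a = b then (\<Sum>c\<in>UNIV. real (w a c)) else - real (w a b))"

definition pinv :: "real^'n^'n \<Rightarrow> real^'n^'n" where
  "pinv A = (THE X. A ** X ** A = A \<and> X ** A ** X = X \<and>
                    transpose (A ** X) = A ** X \<and> transpose (X ** A) = X ** A)"

definition indic_vec :: "'a \<Rightarrow> real^'a" where
  "indic_vec s = (\<chi> i. if i = s then 1 else 0)"

definition has_edge_in :: "('a \<Rightarrow> 'a \<Rightarrow> nat) \<Rightarrow> 'a set \<Rightarrow> bool" where
  "has_edge_in w U \<longleftrightarrow> (\<exists>a\<in>U. \<exists>b\<in>U. 0 < w a b)"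

definition degU :: "('a \<Rightarrow> 'a \<Rightarrow> nat) \<Rightarrow> 'a set \<Rightarrow> 'a \<Rightarrow> real" where
  "degU w U a = (\<Sum>b\<in>U. real (w a b))"

definition volU :: "('a \<Rightarrow> 'a \<Rightarrow> nat) \<Rightarrow> 'a set \<Rightarrow> 'a set \<Rightarrow> real" where
  "volU w U S = (\<Sum>a\<in>S. degU w U a)"

definition cutU :: "('a \<Rightarrow> 'a \<Rightarrow> nat) \<Rightarrow> 'a set \<Rightarrow> 'a set \<Rightarrow> real" where
  "cutU w U S = (\<Sum>a\<in>S. \<Sum>b\<in>U - S. real (w a b))"

definition conductance :: "('a \<Rightarrow> 'a \<Rightarrow> nat) \<Rightarrow> 'a set \<Rightarrow> real" where
  "conductance w U = Min ((\<lambda>S. cutU w U S / min (volU w U S) (volU w U (U - S)))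
                          ` {S. S \<noteq> {} \<and> S \<subset> U})"

text \<open>Sum over the edges {a,b} of E(U) of w_ab * |v a - v b|; each unordered
edge appears twice in the double sum (w a a = 0 so loops contribute nothing).\<close>
definition edge_sumU :: "('a \<Rightarrow> 'a \<Rightarrow> nat) \<Rightarrow> 'a set \<Rightarrow> real^'a \<Rightarrow> real" where
  "edge_sumU w U v = (\<Sum>a\<in>U. \<Sum>b\<in>U. real (w a b) * \<bar>v $ a - v $ b\<bar>) / 2"

end

theory Submission
  imports Defs
begin



lemma lap_apply:
  fixes w :: "'a::finite \<Rightarrow> 'a \<Rightarrow> nat"
  assumes "wgraph w"
  shows "(laplacian w *v v) $ a = (\<Sum>c\<in>UNIV. real (w a c) * (v$a - v$c))"
proof -
  have waa: "w a a = 0" using assms by (simp add: wgraph_def)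
  have eq: "\<And>c. (if a = c then (\<Sum>c\<in>UNIV. real (w a c)) else - real (w a b)) = 0" if False for b
    using that by simp
  have "(laplacian w *v v) $ a = (\<Sum>c\<in>UNIV. (if a = c then (\<Sum>d\<in>UNIV. real (w a d)) else - real (w a c)) * v$c)"
    by (simp add: laplacian_def matrix_vector_mult_def)
  also have "\<dots> = (\<Sum>c\<in>UNIV. (if a = c then (\<Sum>d\<in>UNIV. real (w a d)) * v$c else 0) - real (w a c) * v$c)"
    by (rule sum.cong) (auto simp: waa)
  also have "\<dots> = (\<Sum>d\<in>UNIV. real (w a d)) * v$a - (\<Sum>c\<in>UNIV. real (w a c) * v$c)"
    by (simp add: sum_subtractf)
  also have "\<dots> = (\<Sum>c\<in>UNIV. real (w a c) * (v$a - v$c))"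
    by (simp add: sum_distrib_right right_diff_distrib sum_subtractf)
  finally show ?thesis .
qed

lemma lap_sum_zero:
  fixes w :: "'a::finite \<Rightarrow> 'a \<Rightarrow> nat"
  assumes "wgraph w"
  shows "(\<Sum>a\<in>UNIV. (laplacian w *v v) $ a) = 0"
proof -
  have sym: "\<And>a b. w a b = w b a" using assms by (simp add: wgraph_def)
  have "(\<Sum>a\<in>UNIV. (laplacian w *v v) $ a) = (\<Sum>a\<in>UNIV. \<Sum>c\<in>UNIV. real (w a c) * v$a) - (\<Sum>a\<in>UNIV. \<Sum>c\<in>UNIV. real (w a c) * v$c)"
    by (simp add: lap_apply[OF assms] right_diff_distrib sum_subtractf)
  also have "(\<Sum>a\<in>UNIV. \<Sum>c\<in>UNIV. real (w a c) * v$c) = (\<Sum>c\<in>UNIV. \<Sum>a\<in>UNIV. real (w c a) * v$c)"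
    by (subst sum.swap) (simp add: sym)
  finally show ?thesis by simp
qed

lemma lap_const:
  fixes w :: "'a::finite \<Rightarrow> 'a \<Rightarrow> nat"
  assumes "wgraph w"
  shows "laplacian w *v (\<chi> i. k) = 0"
  by (simp add: vec_eq_iff lap_apply[OF assms])

lemma lap_transpose:
  assumes "wgraph w"
  shows "transpose (laplacian w) = laplacian w"
  using assms unfolding wgraph_def laplacian_def transpose_def
  by (simp add: vec_eq_iff)

definition Pm :: "real^'a::finite^'a" where
  "Pm = (\<chi> i j. 1 / real CARD('a))"

lemma Pm_apply: "((Pm::real^'a::finite^'a) *v x) = (\<chi> i. (\<Sum>j\<in>UNIV. x$j) / real CARD('a))"
  by (simp add: Pm_def matrix_vector_mult_def vec_eq_iff sum_divide_distrib)

lemma Pm_transpose: "transpose (Pm::real^'a^'a) = Pm"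
  by (simp add: Pm_def transpose_def vec_eq_iff)

lemma Pm_idem: "Pm ** Pm = (Pm::real^'a::finite^'a)"
  by (subst matrix_eq) (simp add: matrix_vector_mul_assoc[symmetric] Pm_apply)

lemma lap_Pm:
  assumes "wgraph w"
  shows "laplacian w ** Pm = 0"
  by (subst matrix_eq) (simp add: matrix_vector_mul_assoc[symmetric] Pm_apply lap_const[OF assms])

lemma Pm_lap:
  assumes "wgraph w"
  shows "Pm ** laplacian w = 0"
  by (subst matrix_eq) (simp add: matrix_vector_mul_assoc[symmetric] Pm_apply lap_sum_zero[OF assms] vec_eq_iff)

lemma max_principle:
  fixes w :: "'a::finite \<Rightarrow> 'a \<Rightarrow> nat"
  assumes "wgraph w" "connected_graph w" "laplacian w *v x = 0"
  shows "x$a = x$b"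
proof -
  obtain m where m: "\<And>y. x$y \<le> x$m"
  proof -
    have "finite ((\<lambda>y. x$y) ` UNIV)" by simp
    then obtain m where "x$m = Max ((\<lambda>y. x$y) ` UNIV)"
      by (metis (mono_tags, lifting) Max_in UNIV_not_empty empty_is_image finite imageE)
    then show ?thesis using that by (metis Max_ge finite_imageI finite rangeI)
  qed
  have all: "x$c = x$m" if "(m, c) \<in> (edge_rel w)\<^sup>*" for c
    using that
  proof (induction rule: rtrancl_induct)
    case base then show ?case by simp
  next
    case (step b c)
    have wbc: "0 < w b c" using step(2) by (simp add: edge_rel_def)
    have "(\<Sum>d\<in>UNIV. real (w b d) * (x$b - x$d)) = 0"
      using lap_apply[OF assms(1), of x b] assms(3) by simp
    moreover have "\<forall>d\<in>UNIV. 0 \<le> real (w b d) * (x$b - x$d)"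
      using m step(3) by simp
    ultimately have "real (w b c) * (x$b - x$c) = 0"
      using sum_nonneg_eq_0_iff[of UNIV "\<lambda>d. real (w b d) * (x$b - x$d)"] by simp
    then show ?case using wbc step(3) by simp
  qed
  show ?thesis using all assms(2) unfolding connected_graph_def by metis
qed




lemma matrix_add_rdistrib: "((A + B) ** C) = (A ** C) + (B ** C :: real^_^_)"
  by (vector matrix_matrix_mult_def sum.distrib[symmetric] field_simps)
lemma matrix_sub_ldistrib: "(A ** (B - C)) = (A ** B) - (A ** C :: real^_^_)"
  by (vector matrix_matrix_mult_def sum_subtractf[symmetric] field_simps)
lemma matrix_sub_rdistrib: "((A - B) ** C) = (A ** C) - (B ** C :: real^_^_)"
  by (vector matrix_matrix_mult_def sum_subtractf[symmetric] field_simps)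

lemma M_inj:
  fixes w :: "'a::finite \<Rightarrow> 'a \<Rightarrow> nat"
  assumes "wgraph w" "connected_graph w" "(laplacian w + Pm) *v x = 0"
  shows "x = 0"
proof -
  let ?n = "real CARD('a)"
  have npos: "?n > 0" by simp
  have "(\<Sum>i\<in>UNIV. ((laplacian w + Pm) *v x) $ i) = 0" using assms(3) by simp
  hence "(\<Sum>i\<in>UNIV. (laplacian w *v x) $ i) + (\<Sum>i\<in>UNIV. (Pm *v x) $ i) = 0"
    by (simp add: matrix_vector_mult_add_rdistrib sum.distrib)
  hence "(\<Sum>i\<in>(UNIV::'a set). (\<Sum>j\<in>UNIV. x$j) / ?n) = 0"
    by (simp add: lap_sum_zero[OF assms(1)] Pm_apply)
  hence s0: "(\<Sum>j\<in>UNIV. x$j) = 0" using npos by simp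
  hence "Pm *v x = 0" by (simp add: Pm_apply vec_eq_iff)
  hence L0: "laplacian w *v x = 0" using assms(3) by (simp add: matrix_vector_mult_add_rdistrib)
  fix a0 :: 'a
  have c: "\<And>j. x$j = x$a0" using max_principle[OF assms(1,2) L0] by blast
  have "(\<Sum>j\<in>(UNIV::'a set). x$a0) = (\<Sum>j\<in>UNIV. x$j)" by (intro sum.cong refl) (metis c)
  hence "(\<Sum>j\<in>(UNIV::'a set). x$a0) = 0" using s0 by simp
  hence "x$a0 = 0" by simp
  thus ?thesis using c by (simp add: vec_eq_iff)
qed

lemma pinv_unique:
  fixes A X Y :: "real^'n^'n"
  assumes "A ** X ** A = A" "X ** A ** X = X" "transpose (A ** X) = A ** X" "transpose (X ** A) = X ** A"
      and "A ** Y ** A = A" "Y ** A ** Y = Y" "transpose (A ** Y) = A ** Y" "transpose (Y ** A) = Y ** A"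
  shows "X = Y"
proof -
  have "X = X ** (A ** X)" using assms(2) by (simp add: matrix_mul_assoc)
  also have "\<dots> = X ** transpose (A ** X)" using assms(3) by simp
  also have "\<dots> = X ** transpose X ** transpose A" by (simp add: matrix_transpose_mul matrix_mul_assoc)
  also have "\<dots> = X ** transpose X ** transpose (A ** Y ** A)" using assms(5) by simp
  also have "\<dots> = X ** (transpose (A ** X)) ** transpose (A ** Y)"
    by (simp add: matrix_transpose_mul matrix_mul_assoc)
  also have "\<dots> = X ** (A ** X) ** (A ** Y)" using assms(3,7) by simp
  also have "\<dots> = X ** A ** Y" using assms(2) by (simp add: matrix_mul_assoc)
  finally have 1: "X = X ** A ** Y" .
  have "Y = (Y ** A) ** Y" using assms(6) by (simp add: matrix_mul_assoc)
  also have "\<dots> = transpose (Y ** A) ** Y" using assms(8) by simp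
  also have "\<dots> = transpose A ** transpose Y ** Y" by (simp add: matrix_transpose_mul)
  also have "\<dots> = transpose (A ** X ** A) ** transpose Y ** Y" using assms(1) by simp
  also have "\<dots> = transpose (X ** A) ** transpose (Y ** A) ** Y"
    by (simp add: matrix_transpose_mul matrix_mul_assoc)
  also have "\<dots> = (X ** A) ** (Y ** A) ** Y" using assms(4,8) by simp
  also have "\<dots> = X ** A ** Y" using assms(6) by (metis matrix_mul_assoc)
  finally show ?thesis using 1 by simp
qed

lemma pinv_lap:
  fixes w :: "'a::finite \<Rightarrow> 'a \<Rightarrow> nat"
  assumes "wgraph w" "connected_graph w"
  shows "laplacian w ** pinv (laplacian w) = mat 1 - Pm"
proof -
  let ?L = "laplacian w" and ?M = "laplacian w + Pm"
  have "\<exists>B. B ** ?M = mat 1"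
    using M_inj[OF assms] by (subst matrix_left_invertible_ker) blast
  then obtain B where B1: "B ** ?M = mat 1" by blast
  hence B2: "?M ** B = mat 1" by (simp add: matrix_left_right_inverse)
  have LP: "?L ** Pm = 0" and PL: "Pm ** ?L = 0" and PP: "Pm ** Pm = Pm"
    using lap_Pm[OF assms(1)] Pm_lap[OF assms(1)] Pm_idem by auto
  have MP: "?M ** Pm = Pm" by (simp add: matrix_add_rdistrib LP PP)
  have PM: "Pm ** ?M = Pm" by (simp add: matrix_add_ldistrib PL PP)
  have BP: "B ** Pm = Pm" by (metis B1 MP matrix_mul_assoc matrix_mul_lid)
  have PB: "Pm ** B = Pm" by (metis B2 PM matrix_mul_assoc matrix_mul_rid)
  define X where "X = B - Pm"
  have LB: "?L ** B = mat 1 - Pm"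
  proof -
    have "?M ** B = ?L ** B + Pm ** B" by (rule matrix_add_rdistrib)
    thus ?thesis using B2 PB by (simp add: algebra_simps)
  qed
  have BL: "B ** ?L = mat 1 - Pm"
  proof -
    have "B ** ?M = B ** ?L + B ** Pm" by (rule matrix_add_ldistrib)
    thus ?thesis using B1 BP by (simp add: algebra_simps)
  qed
  have LX: "?L ** X = mat 1 - Pm"
    unfolding X_def by (simp add: matrix_sub_ldistrib LB LP)
  have XL: "X ** ?L = mat 1 - Pm"
    unfolding X_def by (simp add: matrix_sub_rdistrib BL PL)
  have p1: "?L ** X ** ?L = ?L" by (simp add: LX matrix_sub_rdistrib PL)
  have PX: "Pm ** X = 0" unfolding X_def by (simp add: matrix_sub_ldistrib PB PP)
  have p2: "X ** ?L ** X = X"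
  proof -
    have "X ** ?L ** X = (mat 1 - Pm) ** X" using XL by simp
    also have "\<dots> = X - Pm ** X" by (simp add: matrix_sub_rdistrib)
    finally show ?thesis using PX by simp
  qed
  have tP: "transpose (mat 1 - Pm) = mat 1 - Pm"
    by (simp add: transpose_def Pm_def mat_def vec_eq_iff)
  have P: "?L ** X ** ?L = ?L \<and> X ** ?L ** X = X \<and> transpose (?L ** X) = ?L ** X \<and> transpose (X ** ?L) = X ** ?L"
    using p1 p2 LX XL tP by simp
  have "pinv ?L = X"
    unfolding pinv_def
  proof (rule the_equality)
    show "?L ** X ** ?L = ?L \<and> X ** ?L ** X = X \<and> transpose (?L ** X) = ?L ** X \<and> transpose (X ** ?L) = X ** ?L"
      by (rule P)
  next
    fix Y assume "?L ** Y ** ?L = ?L \<and> Y ** ?L ** Y = Y \<and> transpose (?L ** Y) = ?L ** Y \<and> transpose (Y ** ?L) = Y ** ?L"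
    then show "Y = X" using P pinv_unique by metis
  qed
  thus ?thesis using LX by simp
qed

lemma kirchhoff:
  fixes w :: "'a::finite \<Rightarrow> 'a \<Rightarrow> nat" and s t :: 'a
  assumes "wgraph w" "connected_graph w"
  defines "v \<equiv> pinv (laplacian w) *v (indic_vec s - indic_vec t)"
  shows "(\<Sum>c\<in>UNIV. real (w a c) * (v$a - v$c)) = (indic_vec s - indic_vec t) $ a"
proof -
  let ?b = "indic_vec s - indic_vec t :: real^'a"
  have sb: "(\<Sum>j\<in>UNIV. ?b$j) = 0" by (simp add: indic_vec_def sum_subtractf)
  have "laplacian w *v v = (mat 1 - Pm) *v ?b"
    unfolding v_def by (simp add: matrix_vector_mul_assoc pinv_lap[OF assms(1,2)])
  also have "\<dots> = ?b" using sb by (simp add: matrix_vector_mult_diff_rdistrib Pm_apply vec_eq_iff)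
  finally show ?thesis using lap_apply[OF assms(1), of v a] by simp
qed




lemma core_step:
  fixes g c D :: "real \<Rightarrow> real" and N :: "real \<Rightarrow> nat" and \<Phi> G0 :: real
  assumes Phi: "0 < \<Phi>" "\<Phi> \<le> 1"
    and Nmono: "\<And>\<theta> \<theta>'. \<theta> \<le> \<theta>' \<Longrightarrow> g \<theta>' < g \<theta> \<Longrightarrow> N \<theta>' < N \<theta>"
    and gmono: "\<And>\<theta> \<theta>'. \<theta> \<le> \<theta>' \<Longrightarrow> g \<theta>' \<le> g \<theta>"
    and g1: "\<And>\<theta>. 0 < g \<theta> \<Longrightarrow> 1 \<le> g \<theta>"
    and cond: "\<And>\<theta>. 0 < g \<theta> \<Longrightarrow> g \<theta> \<le> G0 \<Longrightarrow> \<Phi> * g \<theta> \<le> c \<theta>"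
    and step: "\<And>\<theta> l. 0 < l \<Longrightarrow> g (\<theta> + l) \<le> g \<theta> - c \<theta> + 1 / l"
    and Dstep: "\<And>\<theta> l. 0 \<le> l \<Longrightarrow> D \<theta> \<le> D (\<theta> + l) + l * g \<theta>"
    and D0: "\<And>\<theta>. g \<theta> = 0 \<Longrightarrow> D \<theta> = 0"
    and gnn: "\<And>\<theta>. 0 \<le> g \<theta>"
  shows "0 < g \<theta> \<Longrightarrow> g \<theta> \<le> G0 \<Longrightarrow>
          D \<theta> \<le> (2/\<Phi>) * (1 + ln (g \<theta>) / (- ln (1 - \<Phi>/2)))"
proof (induction "N \<theta>" arbitrary: \<theta> rule: less_induct)
  case less
  define \<kappa> where "\<kappa> = - ln (1 - \<Phi>/2)"
  have kpos: "0 < \<kappa>" unfolding \<kappa>_def using Phi by simp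
  have ex: "(1 - \<Phi>/2) > 0" using Phi by simp
  let ?g = "g \<theta>"
  have cg: "\<Phi> * ?g \<le> c \<theta>" using cond less.prems by blast
  have cpos: "0 < c \<theta>" using cg Phi less.prems by (smt (verit) mult_pos_pos)
  define l where "l = 2 / c \<theta>"
  have lpos: "0 < l" using cpos by (simp add: l_def)
  have g': "g (\<theta> + l) \<le> ?g - c \<theta> / 2" using step[OF lpos, of \<theta>] cpos by (simp add: l_def)
  have g'2: "g (\<theta> + l) \<le> ?g * (1 - \<Phi>/2)" using g' cg by (simp add: algebra_simps)
  have g'lt: "g (\<theta> + l) < ?g" using g' cpos by simp
  have lg: "l * ?g \<le> 2 / \<Phi>"
  proof -
    have "l * ?g = 2 * ?g / c \<theta>" by (simp add: l_def)
    also have "\<dots> \<le> 2 * ?g / (\<Phi> * ?g)"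
      using cg Phi less.prems cpos by (intro divide_left_mono) (auto intro: mult_pos_pos)
    also have "\<dots> = 2 / \<Phi>" using less.prems by simp
    finally show ?thesis .
  qed
  have D1: "D \<theta> \<le> D (\<theta> + l) + 2 / \<Phi>" using Dstep[of l \<theta>] lpos lg by simp
  have lng: "0 \<le> ln ?g" using g1 less.prems by simp
  show ?case
  proof (cases "g (\<theta> + l) = 0")
    case True
    hence "D (\<theta> + l) = 0" by (rule D0)
    moreover have "0 \<le> (2/\<Phi>) * (ln ?g / \<kappa>)" using lng kpos Phi by simp
    ultimately show ?thesis using D1 unfolding \<kappa>_def[symmetric] by (simp add: algebra_simps)
  next
    case False
    hence gp: "0 < g (\<theta> + l)" using gnn by (simp add: order_le_neq_trans)
    have "N (\<theta> + l) < N \<theta>" using Nmono[of \<theta> "\<theta> + l"] lpos g'lt by simp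
    with less.hyps[OF this] gp have IH: "D (\<theta> + l) \<le> (2/\<Phi>) * (1 + ln (g (\<theta> + l)) / \<kappa>)"
      using g'lt less.prems unfolding \<kappa>_def by simp
    have "ln (g (\<theta> + l)) \<le> ln (?g * (1 - \<Phi>/2))" using gp g'2 by simp
    also have "\<dots> = ln ?g - \<kappa>" using less.prems ex by (simp add: ln_mult \<kappa>_def)
    finally have "ln (g (\<theta> + l)) / \<kappa> \<le> (ln ?g - \<kappa>) / \<kappa>" using kpos by (simp add: divide_right_mono)
    also have "\<dots> = ln ?g / \<kappa> - 1" using kpos by (simp add: diff_divide_distrib)
    finally have "ln (g (\<theta> + l)) / \<kappa> \<le> ln ?g / \<kappa> - 1" .
    hence "(2/\<Phi>) * (1 + ln (g (\<theta> + l)) / \<kappa>) \<le> (2/\<Phi>) * (ln ?g / \<kappa>)"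
      using Phi by (intro mult_left_mono) auto
    with IH D1 show ?thesis unfolding \<kappa>_def[symmetric] by (simp add: algebra_simps)
  qed
qed

lemma final_numeric:
  fixes \<Phi> V x :: real
  assumes Phi: "0 < \<Phi>" "\<Phi> \<le> 1" and g: "1 \<le> x" "x \<le> V / 2"
  shows "(2/\<Phi>) * (1 + ln x / (- ln (1 - \<Phi>/2))) \<le> 4 * ln V / \<Phi>^2"
proof -
  define \<kappa> where "\<kappa> = - ln (1 - \<Phi>/2)"
  have "ln (1 - \<Phi>/2) \<le> (1 - \<Phi>/2) - 1" using Phi by (intro ln_le_minus_one) simp
  hence k: "\<Phi>/2 \<le> \<kappa>" unfolding \<kappa>_def by simp
  have lnx: "0 \<le> ln x" using g by simp
  have "ln x / \<kappa> \<le> ln x / (\<Phi>/2)" using k lnx Phi by (intro divide_left_mono) auto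
  hence "(2/\<Phi>) * (1 + ln x / \<kappa>) \<le> (2/\<Phi>) * (1 + ln x / (\<Phi>/2))"
    using Phi by (intro mult_left_mono) auto
  also have "\<dots> = 2/\<Phi> + 4 * ln x / \<Phi>^2" using Phi by (simp add: field_simps power2_eq_square)
  also have "ln x \<le> ln (V/2)" using g by simp
  hence "4 * ln x / \<Phi>^2 \<le> 4 * ln (V/2) / \<Phi>^2" using Phi by (simp add: divide_right_mono)
  also have "ln (V/2) = ln V - ln 2" using g by (simp add: ln_div)
  finally have A: "(2/\<Phi>) * (1 + ln x / \<kappa>) \<le> 2/\<Phi> + 4 * (ln V - ln 2) / \<Phi>^2" by simp
  have "ln (1/2::real) \<le> 1/2 - 1" by (intro ln_le_minus_one) simp
  hence l2: "1/2 \<le> ln (2::real)" by (simp add: ln_div)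
  have "2/\<Phi> = 2 * \<Phi> / \<Phi>^2" using Phi by (simp add: power2_eq_square)
  also have "\<dots> \<le> 4 * ln 2 / \<Phi>^2" using Phi l2 by (intro divide_right_mono) auto
  finally have "2/\<Phi> + 4 * (ln V - ln 2) / \<Phi>^2 \<le> 4 * ln V / \<Phi>^2"
    by (simp add: diff_divide_distrib right_diff_distrib)
  with A show ?thesis unfolding \<kappa>_def by simp
qed




lemma degU_nonneg: "0 \<le> degU w U a" by (simp add: degU_def sum_nonneg)

lemma volU_nonneg: "0 \<le> volU w U S" by (simp add: volU_def degU_nonneg sum_nonneg)

lemma volU_nat: "volU w U S = real (\<Sum>a\<in>S. \<Sum>b\<in>U. w a b)"
  by (simp add: volU_def degU_def)

lemma volU_mono:
  fixes w :: "'a::finite \<Rightarrow> 'a \<Rightarrow> nat"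
  shows "S \<subseteq> T \<Longrightarrow> volU w U S \<le> volU w U T"
  unfolding volU_def by (intro sum_mono2) (auto simp: degU_nonneg)

lemma volU_diff:
  fixes w :: "'a::finite \<Rightarrow> 'a \<Rightarrow> nat"
  shows "S \<subseteq> T \<Longrightarrow> volU w U (T - S) = volU w U T - volU w U S"
  unfolding volU_def using sum.subset_diff[of S T "degU w U"] by simp

lemma cut_step:
  fixes w :: "'a::finite \<Rightarrow> 'a \<Rightarrow> nat" and p :: "'a \<Rightarrow> real"
  assumes cur: "(\<Sum>a\<in>{x\<in>U. \<theta> < p x}. \<Sum>b\<in>{x\<in>U. p x \<le> \<theta>}. real (w a b) * (p a - p b)) \<le> 1"
    and lpos: "0 < l"
  shows "volU w U {x\<in>U. \<theta> + l < p x} \<le> volU w U {x\<in>U. \<theta> < p x} - cutU w U {x\<in>U. \<theta> < p x} + 1 / l"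
proof -
  define S where "S = {x\<in>U. \<theta> < p x}"
  define S' where "S' = {x\<in>U. \<theta> + l < p x}"
  define L where "L = {x\<in>U. p x \<le> \<theta>}"
  have S'S: "S' \<subseteq> S" unfolding S_def S'_def using lpos by auto
  have US: "U - S = L" unfolding S_def L_def by auto
  have c: "cutU w U S = (\<Sum>a\<in>S - S'. \<Sum>b\<in>L. real (w a b)) + (\<Sum>a\<in>S'. \<Sum>b\<in>L. real (w a b))"
    unfolding cutU_def US using sum.subset_diff[OF S'S] by simp
  have i: "(\<Sum>a\<in>S - S'. \<Sum>b\<in>L. real (w a b)) \<le> volU w U S - volU w U S'"
  proof -
    have "(\<Sum>a\<in>S - S'. \<Sum>b\<in>L. real (w a b)) \<le> (\<Sum>a\<in>S - S'. degU w U a)"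
      unfolding degU_def by (intro sum_mono sum_mono2) (auto simp: L_def)
    also have "\<dots> = volU w U (S - S')" by (simp add: volU_def)
    finally show ?thesis using volU_diff[OF S'S] by simp
  qed
  have ii: "(\<Sum>a\<in>S'. \<Sum>b\<in>L. real (w a b)) \<le> 1 / l"
  proof -
    have "(\<Sum>a\<in>S'. \<Sum>b\<in>L. real (w a b)) \<le> (\<Sum>a\<in>S'. \<Sum>b\<in>L. real (w a b) * (p a - p b) / l)"
    proof (intro sum_mono)
      fix a b assume "a \<in> S'" "b \<in> L"
      hence "l \<le> p a - p b" unfolding S'_def L_def by auto
      hence "real (w a b) * l \<le> real (w a b) * (p a - p b)" by (intro mult_left_mono) auto
      thus "real (w a b) \<le> real (w a b) * (p a - p b) / l" using lpos by (simp add: field_simps)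
    qed
    also have "\<dots> = (\<Sum>a\<in>S'. \<Sum>b\<in>L. real (w a b) * (p a - p b)) / l"
      by (simp add: sum_divide_distrib)
    also have "(\<Sum>a\<in>S'. \<Sum>b\<in>L. real (w a b) * (p a - p b)) \<le> (\<Sum>a\<in>S. \<Sum>b\<in>L. real (w a b) * (p a - p b))"
    proof (intro sum_mono2)
      fix a assume "a \<in> S - S'"
      thus "0 \<le> (\<Sum>b\<in>L. real (w a b) * (p a - p b))"
        unfolding S_def L_def by (intro sum_nonneg) auto
    qed (use S'S in auto)
    also have "\<dots> \<le> 1" using cur unfolding S_def L_def .
    finally show ?thesis using lpos by (simp add: divide_right_mono)
  qed
  show ?thesis using c i ii unfolding S_def[symmetric] S'_def[symmetric] by linarith
qed




definition Dfun :: "('a \<Rightarrow> 'a \<Rightarrow> nat) \<Rightarrow> 'a set \<Rightarrow> ('a \<Rightarrow> real) \<Rightarrow> real \<Rightarrow> real" where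
  "Dfun w U p \<theta> = (\<Sum>a\<in>U. \<Sum>b\<in>U. real (w a b) * max 0 (p a - max (p b) \<theta>))"

lemma Dfun_step:
  fixes w :: "'a::finite \<Rightarrow> 'a \<Rightarrow> nat"
  assumes "0 \<le> l"
  shows "Dfun w U p \<theta> \<le> Dfun w U p (\<theta> + l) + l * volU w U {x\<in>U. \<theta> < p x}"
proof -
  have "Dfun w U p \<theta> \<le> (\<Sum>a\<in>U. \<Sum>b\<in>U. real (w a b) * max 0 (p a - max (p b) (\<theta>+l))
          + l * (if \<theta> < p a then real (w a b) else 0))"
    unfolding Dfun_def
  proof (intro sum_mono)
    fix a b
    have "max 0 (p a - max (p b) \<theta>) \<le> max 0 (p a - max (p b) (\<theta>+l)) + l * (if \<theta> < p a then 1 else 0)"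
      using assms by (auto simp: max_def)
    from mult_left_mono[OF this, of "real (w a b)"]
    show "real (w a b) * max 0 (p a - max (p b) \<theta>) \<le> real (w a b) * max 0 (p a - max (p b) (\<theta>+l))
          + l * (if \<theta> < p a then real (w a b) else 0)"
      by (simp add: algebra_simps if_distrib cong: if_cong)
  qed
  also have "\<dots> = Dfun w U p (\<theta> + l) + l * (\<Sum>a\<in>U. if \<theta> < p a then degU w U a else 0)"
  proof -
    have "(\<Sum>a\<in>U. \<Sum>b\<in>U. l * (if \<theta> < p a then real (w a b) else 0))
        = l * (\<Sum>a\<in>U. if \<theta> < p a then degU w U a else 0)"
      by (auto simp: sum_distrib_left degU_def intro!: sum.cong)
    thus ?thesis by (simp add: Dfun_def sum.distrib)
  qed
  also have "(\<Sum>a\<in>U. if \<theta> < p a then degU w U a else 0) = volU w U {x\<in>U. \<theta> < p x}"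
    by (simp add: volU_def sum.inter_filter)
  finally show ?thesis .
qed

lemma Dfun_zero:
  fixes w :: "'a::finite \<Rightarrow> 'a \<Rightarrow> nat"
  assumes "volU w U {x\<in>U. \<theta> < p x} = 0"
  shows "Dfun w U p \<theta> = 0"
proof -
  have z: "real (w a b) = 0" if "a \<in> U" "b \<in> U" "\<theta> < p a" for a b
  proof -
    have "(\<Sum>a\<in>{x\<in>U. \<theta> < p x}. degU w U a) = 0" using assms by (simp add: volU_def)
    hence "degU w U a = 0" using that sum_nonneg_eq_0_iff[of "{x\<in>U. \<theta> < p x}" "degU w U"]
      by (simp add: degU_nonneg)
    hence "(\<Sum>b\<in>U. real (w a b)) = 0" by (simp add: degU_def)
    thus ?thesis using that(2) sum_nonneg_eq_0_iff[of U "\<lambda>b. real (w a b)"] by simp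
  qed
  have t: "real (w a b) * max 0 (p a - max (p b) \<theta>) = 0" if "a \<in> U" "b \<in> U" for a b
  proof (cases "\<theta> < p a")
    case True thus ?thesis using z that by simp
  next
    case False thus ?thesis by (simp add: max_def)
  qed
  show ?thesis unfolding Dfun_def
    by (intro sum.neutral ballI) (simp add: t)
qed

lemma Dfun_nonneg: "0 \<le> Dfun w U p \<theta>"
  by (simp add: Dfun_def sum_nonneg)




lemma upper_half:
  fixes w :: "'a::finite \<Rightarrow> 'a \<Rightarrow> nat" and p :: "'a \<Rightarrow> real"
  assumes cur: "\<And>\<theta>. (\<Sum>a\<in>{x\<in>U. \<theta> < p x}. \<Sum>b\<in>{x\<in>U. p x \<le> \<theta>}. real (w a b) * (p a - p b)) \<le> 1"
    and Phi: "0 < \<Phi>" "\<Phi> \<le> 1"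
    and condPhi: "\<And>S. S \<noteq> {} \<Longrightarrow> S \<subset> U \<Longrightarrow> \<Phi> \<le> cutU w U S / min (volU w U S) (volU w U (U - S))"
    and vol: "1 \<le> volU w U U"
    and th0: "volU w U {x\<in>U. \<theta>0 < p x} \<le> volU w U U / 2"
  shows "Dfun w U p \<theta>0 \<le> 4 * ln (volU w U U) / \<Phi>^2"
proof -
  define g where "g \<theta> = volU w U {x\<in>U. \<theta> < p x}" for \<theta>
  define c where "c \<theta> = cutU w U {x\<in>U. \<theta> < p x}" for \<theta>
  define N where "N \<theta> = card {x\<in>U. \<theta> < p x}" for \<theta>
  define V where "V = volU w U U"
  have gnn: "\<And>\<theta>. 0 \<le> g \<theta>" by (simp add: g_def volU_nonneg)
  have gmono: "\<And>\<theta> \<theta>'. \<theta> \<le> \<theta>' \<Longrightarrow> g \<theta>' \<le> g \<theta>"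
    unfolding g_def by (intro volU_mono) auto
  have Nmono: "N \<theta>' < N \<theta>" if "\<theta> \<le> \<theta>'" "g \<theta>' < g \<theta>" for \<theta> \<theta>'
  proof -
    have sub: "{x\<in>U. \<theta>' < p x} \<subseteq> {x\<in>U. \<theta> < p x}" using that(1) by auto
    have "{x\<in>U. \<theta>' < p x} \<noteq> {x\<in>U. \<theta> < p x}" using that(2) unfolding g_def by auto
    hence "{x\<in>U. \<theta>' < p x} \<subset> {x\<in>U. \<theta> < p x}" using sub by blast
    thus ?thesis unfolding N_def by (intro psubset_card_mono) auto
  qed
  have g1: "1 \<le> g \<theta>" if "0 < g \<theta>" for \<theta>
  proof -
    obtain n :: nat where n: "g \<theta> = real n" unfolding g_def using volU_nat by blast
    show ?thesis using that unfolding n by simp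
  qed
  have cond: "\<Phi> * g \<theta> \<le> c \<theta>" if "0 < g \<theta>" "g \<theta> \<le> V / 2" for \<theta>
  proof -
    define S where "S = {x\<in>U. \<theta> < p x}"
    have ne: "S \<noteq> {}" using that(1) unfolding g_def S_def[symmetric] by (auto simp: volU_def)
    have "S \<noteq> U" using that vol unfolding g_def S_def[symmetric] V_def by auto
    hence ps: "S \<subset> U" unfolding S_def by auto
    have "volU w U (U - S) = V - g \<theta>" unfolding V_def g_def S_def[symmetric] using ps by (intro volU_diff) auto
    hence mn: "min (volU w U S) (volU w U (U - S)) = g \<theta>" using that unfolding g_def S_def[symmetric] by simp
    have "\<Phi> \<le> c \<theta> / g \<theta>" using condPhi[OF ne ps] mn unfolding c_def S_def[symmetric] by simp
    thus ?thesis using that(1) by (simp add: field_simps)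
  qed
  have step: "g (\<theta> + l) \<le> g \<theta> - c \<theta> + 1 / l" if "0 < l" for \<theta> l
    unfolding g_def c_def by (rule cut_step[OF cur that])
  have Dstep: "Dfun w U p \<theta> \<le> Dfun w U p (\<theta> + l) + l * g \<theta>" if "0 \<le> l" for \<theta> l
    unfolding g_def by (rule Dfun_step[OF that])
  have D0: "Dfun w U p \<theta> = 0" if "g \<theta> = 0" for \<theta>
    using that unfolding g_def by (rule Dfun_zero)
  show ?thesis
  proof (cases "g \<theta>0 = 0")
    case True
    hence "Dfun w U p \<theta>0 = 0" by (rule D0)
    moreover have "0 \<le> 4 * ln V / \<Phi>^2" using vol unfolding V_def by simp
    ultimately show ?thesis unfolding V_def by simp
  next
    case False
    hence gp: "0 < g \<theta>0" using gnn by (simp add: order_le_neq_trans)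
    have gle: "g \<theta>0 \<le> V / 2" using th0 unfolding g_def V_def .
    have "Dfun w U p \<theta>0 \<le> (2/\<Phi>) * (1 + ln (g \<theta>0) / (- ln (1 - \<Phi>/2)))"
      using Phi(1) Phi(2) Nmono gmono g1 cond step Dstep D0 gnn gp gle
      by (rule core_step[where g=g and c=c and D="Dfun w U p" and N=N and \<Phi>=\<Phi>])
    also have "\<dots> \<le> 4 * ln V / \<Phi>^2"
      using final_numeric[OF Phi g1[OF gp] gle] .
    finally show ?thesis unfolding V_def .
  qed
qed




lemma cut_flow:
  fixes w :: "'a::finite \<Rightarrow> 'a \<Rightarrow> nat" and p \<beta> :: "'a \<Rightarrow> real"
  assumes "wgraph w" and K: "\<And>a. (\<Sum>c\<in>UNIV. real (w a c) * (p a - p c)) = \<beta> a"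
  shows "(\<Sum>a\<in>S. \<Sum>c\<in>-S. real (w a c) * (p a - p c)) = (\<Sum>a\<in>S. \<beta> a)"
proof -
  have sym: "\<And>a b. w a b = w b a" using assms(1) by (simp add: wgraph_def)
  define X where "X = (\<Sum>a\<in>S. \<Sum>c\<in>S. real (w a c) * (p a - p c))"
  have "X = (\<Sum>c\<in>S. \<Sum>a\<in>S. real (w a c) * (p a - p c))" unfolding X_def by (rule sum.swap)
  also have "\<dots> = - X" unfolding X_def
    by (simp add: sym sum_negf[symmetric] algebra_simps)
  finally have X0: "X = 0" by simp
  have "(\<Sum>a\<in>S. \<beta> a) = (\<Sum>a\<in>S. \<Sum>c\<in>UNIV. real (w a c) * (p a - p c))" by (simp add: K)
  also have "\<dots> = (\<Sum>a\<in>S. (\<Sum>c\<in>-S. real (w a c) * (p a - p c)) + (\<Sum>c\<in>S. real (w a c) * (p a - p c)))"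
  proof (intro sum.cong refl)
    fix a
    have "UNIV = (-S) \<union> S" by auto
    thus "(\<Sum>c\<in>UNIV. real (w a c) * (p a - p c)) = (\<Sum>c\<in>-S. real (w a c) * (p a - p c)) + (\<Sum>c\<in>S. real (w a c) * (p a - p c))"
      by (metis Compl_disjoint2 finite sum.union_disjoint)
  qed
  also have "\<dots> = (\<Sum>a\<in>S. \<Sum>c\<in>-S. real (w a c) * (p a - p c)) + X"
    by (simp add: X_def sum.distrib)
  finally show ?thesis using X0 by simp
qed

lemma current_bound:
  fixes w :: "'a::finite \<Rightarrow> 'a \<Rightarrow> nat" and p \<beta> :: "'a \<Rightarrow> real"
  assumes "wgraph w" and K: "\<And>a. (\<Sum>c\<in>UNIV. real (w a c) * (p a - p c)) = \<beta> a"
    and B: "\<And>S. (\<Sum>a\<in>S. \<beta> a) \<le> 1"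
  shows "(\<Sum>a\<in>{x\<in>U. \<theta> < p x}. \<Sum>b\<in>{x\<in>U. p x \<le> \<theta>}. real (w a b) * (p a - p b)) \<le> 1"
proof -
  define S where "S = {x. \<theta> < p x}"
  have "(\<Sum>a\<in>{x\<in>U. \<theta> < p x}. \<Sum>b\<in>{x\<in>U. p x \<le> \<theta>}. real (w a b) * (p a - p b))
      \<le> (\<Sum>a\<in>{x\<in>U. \<theta> < p x}. \<Sum>b\<in>-S. real (w a b) * (p a - p b))"
  proof (intro sum_mono)
    fix a assume a: "a \<in> {x\<in>U. \<theta> < p x}"
    show "(\<Sum>b\<in>{x\<in>U. p x \<le> \<theta>}. real (w a b) * (p a - p b)) \<le> (\<Sum>b\<in>-S. real (w a b) * (p a - p b))"
    proof (rule sum_mono2)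
      show "{x\<in>U. p x \<le> \<theta>} \<subseteq> -S" by (auto simp: S_def)
      fix b assume "b \<in> -S - {x\<in>U. p x \<le> \<theta>}"
      hence "p b \<le> \<theta>" by (simp add: S_def)
      thus "0 \<le> real (w a b) * (p a - p b)" using a by simp
    qed simp
  qed
  also have "\<dots> \<le> (\<Sum>a\<in>S. \<Sum>b\<in>-S. real (w a b) * (p a - p b))"
  proof (rule sum_mono2)
    show "{x\<in>U. \<theta> < p x} \<subseteq> S" by (auto simp: S_def)
    fix a assume "a \<in> S - {x\<in>U. \<theta> < p x}"
    hence a: "\<theta> < p a" by (simp add: S_def)
    show "0 \<le> (\<Sum>b\<in>-S. real (w a b) * (p a - p b))"
    proof (rule sum_nonneg)
      fix b assume "b \<in> -S"
      hence "p b \<le> \<theta>" by (simp add: S_def)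
      thus "0 \<le> real (w a b) * (p a - p b)" using a by simp
    qed
  qed simp
  also have "\<dots> = (\<Sum>a\<in>S. \<beta> a)" by (rule cut_flow[OF assms(1) K])
  also have "\<dots> \<le> 1" by (rule B)
  finally show ?thesis .
qed

lemma median_exists:
  fixes w :: "'a::finite \<Rightarrow> 'a \<Rightarrow> nat" and p :: "'a \<Rightarrow> real"
  assumes "U \<noteq> {}"
  shows "\<exists>\<theta>0. volU w U {x\<in>U. \<theta>0 < p x} \<le> volU w U U / 2 \<and> volU w U {x\<in>U. p x < \<theta>0} \<le> volU w U U / 2"
proof -
  define V where "V = volU w U U"
  define A where "A = {t \<in> p ` U. volU w U {x\<in>U. t < p x} \<le> V / 2}"
  have finA: "finite A" unfolding A_def by simp
  define m where "m = Max (p ` U)"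
  have mU: "m \<in> p ` U" unfolding m_def using assms by (intro Max_in) auto
  have e: "{x\<in>U. m < p x} = {}" unfolding m_def by (auto simp: not_less)
  have "volU w U {x\<in>U. m < p x} = 0" unfolding e by (simp add: volU_def)
  moreover have "0 \<le> V" unfolding V_def by (rule volU_nonneg)
  ultimately have "m \<in> A" using mU unfolding A_def by simp
  hence Ane: "A \<noteq> {}" by auto
  define t0 where "t0 = Min A"
  have t0A: "t0 \<in> A" unfolding t0_def using finA Ane by (rule Min_in)
  have up: "volU w U {x\<in>U. t0 < p x} \<le> V / 2" using t0A unfolding A_def by simp
  have low: "volU w U {x\<in>U. p x < t0} \<le> V / 2"
  proof (rule ccontr)
    assume bad: "\<not> ?thesis"
    define B where "B = {t \<in> p ` U. t < t0}"
    have "B \<noteq> {}"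
    proof
      assume "B = {}"
      hence e: "{x\<in>U. p x < t0} = {}" unfolding B_def by auto
      have "volU w U {x\<in>U. p x < t0} = 0" unfolding e by (simp add: volU_def)
      thus False using bad volU_nonneg[of w U U] unfolding V_def by simp
    qed
    moreover have finB: "finite B" unfolding B_def by simp
    ultimately have t1B: "Max B \<in> B" by (rule Max_in[rotated])
    define t1 where "t1 = Max B"
    have t1: "t1 \<in> p ` U" "t1 < t0" using t1B unfolding t1_def B_def by auto
    have "t1 \<notin> A"
    proof
      assume "t1 \<in> A"
      hence "t0 \<le> t1" unfolding t0_def using finA by simp
      thus False using t1 by simp
    qed
    hence big: "volU w U {x\<in>U. t1 < p x} > V / 2" using t1 unfolding A_def by auto
    have "{x\<in>U. t1 < p x} \<subseteq> {x\<in>U. t0 \<le> p x}"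
    proof
      fix x assume x: "x \<in> {x\<in>U. t1 < p x}"
      show "x \<in> {x\<in>U. t0 \<le> p x}"
      proof (rule ccontr)
        assume "x \<notin> {x\<in>U. t0 \<le> p x}"
        hence "p x \<in> B" using x unfolding B_def by auto
        hence "p x \<le> t1" unfolding t1_def using finB by simp
        thus False using x by simp
      qed
    qed
    hence "volU w U {x\<in>U. t1 < p x} \<le> volU w U {x\<in>U. t0 \<le> p x}" by (rule volU_mono)
    moreover have "{x\<in>U. t0 \<le> p x} = U - {x\<in>U. p x < t0}" by auto
    hence "volU w U {x\<in>U. t0 \<le> p x} = V - volU w U {x\<in>U. p x < t0}"
      unfolding V_def by (simp add: volU_diff)
    ultimately show False using big bad unfolding V_def by linarith
  qed
  show ?thesis using up low unfolding V_def by blast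
qed




lemma edge_sum_split:
  fixes w :: "'a::finite \<Rightarrow> 'a \<Rightarrow> nat" and v :: "real^'a"
  assumes "wgraph w"
  shows "edge_sumU w U v = Dfun w U (\<lambda>x. v$x) \<theta>0 + Dfun w U (\<lambda>x. - v$x) (-\<theta>0)"
proof -
  have sym: "\<And>a b. w a b = w b a" using assms(1) by (simp add: wgraph_def)
  define T where "T a b = max 0 (v$a - max (v$b) \<theta>0) + max 0 (- v$a - max (- v$b) (-\<theta>0))" for a b
  have pt: "\<bar>v$a - v$b\<bar> = T a b + T b a" for a b
    unfolding T_def by (auto simp: max_def abs_if)
  have "(\<Sum>a\<in>U. \<Sum>b\<in>U. real (w a b) * \<bar>v$a - v$b\<bar>)
      = (\<Sum>a\<in>U. \<Sum>b\<in>U. real (w a b) * T a b) + (\<Sum>a\<in>U. \<Sum>b\<in>U. real (w a b) * T b a)"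
    by (simp add: pt distrib_left sum.distrib)
  also have "(\<Sum>a\<in>U. \<Sum>b\<in>U. real (w a b) * T b a) = (\<Sum>a\<in>U. \<Sum>b\<in>U. real (w a b) * T a b)"
    by (subst sum.swap) (simp add: sym)
  finally have "edge_sumU w U v = (\<Sum>a\<in>U. \<Sum>b\<in>U. real (w a b) * T a b)"
    by (simp add: edge_sumU_def)
  also have "\<dots> = Dfun w U (\<lambda>x. v$x) \<theta>0 + Dfun w U (\<lambda>x. - v$x) (-\<theta>0)"
    by (simp add: Dfun_def T_def distrib_left sum.distrib)
  finally show ?thesis .
qed

lemma cut_le_min:
  fixes w :: "'a::finite \<Rightarrow> 'a \<Rightarrow> nat"
  assumes "wgraph w" "S \<subseteq> U"
  shows "cutU w U S \<le> volU w U S" "cutU w U S \<le> volU w U (U - S)"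
proof -
  have sym: "\<And>a b. w a b = w b a" using assms(1) by (simp add: wgraph_def)
  show "cutU w U S \<le> volU w U S"
    unfolding cutU_def volU_def degU_def by (intro sum_mono sum_mono2) auto
  have "cutU w U S = (\<Sum>b\<in>U - S. \<Sum>a\<in>S. real (w b a))"
    unfolding cutU_def by (subst sum.swap) (simp add: sym)
  also have "\<dots> \<le> volU w U (U - S)"
    unfolding volU_def degU_def using assms(2) by (intro sum_mono sum_mono2) auto
  finally show "cutU w U S \<le> volU w U (U - S)" .
qed

lemma cond_le:
  fixes w :: "'a::finite \<Rightarrow> 'a \<Rightarrow> nat"
  assumes "S \<noteq> {}" "S \<subset> U"
  shows "conductance w U \<le> cutU w U S / min (volU w U S) (volU w U (U - S))"
  unfolding conductance_def using assms by (intro Min_le) auto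

lemma cond_le1:
  fixes w :: "'a::finite \<Rightarrow> 'a \<Rightarrow> nat"
  assumes "wgraph w" "has_edge_in w U"
  shows "conductance w U \<le> 1"
proof -
  obtain a b where ab: "a \<in> U" "b \<in> U" "0 < w a b" using assms(2) by (auto simp: has_edge_in_def)
  have "w a a = 0" using assms(1) by (simp add: wgraph_def)
  hence "a \<noteq> b" using ab(3) by (cases "a = b") auto
  hence ps: "{a} \<subset> U" using ab by blast
  have sub: "{a} \<subseteq> U" using ab by simp
  note cl = cut_le_min[OF assms(1) sub]
  have c1: "cutU w U {a} \<le> volU w U {a}" by (rule cl(1))
  have c2: "cutU w U {a} \<le> volU w U (U - {a})" by (rule cl(2))
  have "cutU w U {a} / min (volU w U {a}) (volU w U (U - {a})) \<le> 1"
  proof (cases "min (volU w U {a}) (volU w U (U - {a})) = 0")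
    case True thus ?thesis by simp
  next
    case False
    hence "0 < min (volU w U {a}) (volU w U (U - {a}))"
      using volU_nonneg[of w U "{a}"] volU_nonneg[of w U "U - {a}"] by linarith
    thus ?thesis using c1 c2 by simp
  qed
  moreover have "conductance w U \<le> cutU w U {a} / min (volU w U {a}) (volU w U (U - {a}))"
    by (rule cond_le) (use ps in auto)
  ultimately show ?thesis by linarith
qed

lemma vol_ge1:
  fixes w :: "'a::finite \<Rightarrow> 'a \<Rightarrow> nat"
  assumes "has_edge_in w U"
  shows "1 \<le> volU w U U"
proof -
  obtain a b where ab: "a \<in> U" "b \<in> U" "0 < w a b" using assms by (auto simp: has_edge_in_def)
  have "real (w a b) \<le> degU w U a" unfolding degU_def using ab by (intro member_le_sum) auto
  also have "\<dots> \<le> volU w U U" unfolding volU_def using ab by (intro member_le_sum degU_nonneg) auto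
  finally show ?thesis using ab by simp
qed

theorem mainTheorem15:
  fixes w :: "'a::finite \<Rightarrow> 'a \<Rightarrow> nat" and U :: "'a set" and s t :: 'a
  assumes "wgraph w"
    and "connected_graph w"
    and "has_edge_in w U"
    and "conductance w U > 0"
    and "0 < w s t"
  shows "edge_sumU w U (pinv (laplacian w) *v (indic_vec s - indic_vec t))
           \<le> 8 * ln (volU w U U) / (conductance w U)^2"
proof -
  define v where "v = pinv (laplacian w) *v (indic_vec s - indic_vec t)"
  define \<beta> where "\<beta> a = (indic_vec s - indic_vec t :: real^'a) $ a" for a
  define \<Phi> where "\<Phi> = conductance w U"
  have K: "\<And>a. (\<Sum>c\<in>UNIV. real (w a c) * (v$a - v$c)) = \<beta> a"
    unfolding v_def \<beta>_def by (rule kirchhoff[OF assms(1,2)])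
  have K': "(\<Sum>c\<in>UNIV. real (w a c) * ((- v$a) - (- v$c))) = - \<beta> a" for a
  proof -
    have "(\<Sum>c\<in>UNIV. real (w a c) * ((- v$a) - (- v$c))) = (\<Sum>c\<in>UNIV. - (real (w a c) * (v$a - v$c)))"
      by (intro sum.cong refl) (simp add: algebra_simps)
    also have "\<dots> = - \<beta> a" by (simp only: sum_negf K)
    finally show ?thesis .
  qed
  have sb: "(\<Sum>a\<in>S. \<beta> a) = (if s \<in> S then 1 else 0) - (if t \<in> S then 1 else 0)" for S
    by (simp add: \<beta>_def indic_vec_def sum_subtractf)
  have B1: "\<And>S. (\<Sum>a\<in>S. \<beta> a) \<le> 1" using sb by simp
  have B2: "\<And>S. (\<Sum>a\<in>S. - \<beta> a) \<le> 1" using sb by (simp add: sum_negf)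
  have Phi: "0 < \<Phi>" "\<Phi> \<le> 1" using assms(4) cond_le1[OF assms(1,3)] by (auto simp: \<Phi>_def)
  have condPhi: "\<And>S. S \<noteq> {} \<Longrightarrow> S \<subset> U \<Longrightarrow> \<Phi> \<le> cutU w U S / min (volU w U S) (volU w U (U - S))"
    unfolding \<Phi>_def by (rule cond_le)
  have vol: "1 \<le> volU w U U" by (rule vol_ge1[OF assms(3)])
  have Une: "U \<noteq> {}" using assms(3) by (auto simp: has_edge_in_def)
  obtain \<theta>0 where th: "volU w U {x\<in>U. \<theta>0 < v$x} \<le> volU w U U / 2"
      "volU w U {x\<in>U. v$x < \<theta>0} \<le> volU w U U / 2"
    using median_exists[OF Une, of w "\<lambda>x. v$x"] by blast
  have th2: "volU w U {x\<in>U. -\<theta>0 < - v$x} \<le> volU w U U / 2" using th(2) by simp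
  have cur1: "\<And>\<theta>. (\<Sum>a\<in>{x\<in>U. \<theta> < v$x}. \<Sum>b\<in>{x\<in>U. v$x \<le> \<theta>}. real (w a b) * (v$a - v$b)) \<le> 1"
    by (rule current_bound[OF assms(1) K B1])
  have cur2: "\<And>\<theta>. (\<Sum>a\<in>{x\<in>U. \<theta> < - v$x}. \<Sum>b\<in>{x\<in>U. - v$x \<le> \<theta>}. real (w a b) * ((- v$a) - (- v$b))) \<le> 1"
    by (rule current_bound[OF assms(1) K' B2])
  have u1: "Dfun w U (\<lambda>x. v$x) \<theta>0 \<le> 4 * ln (volU w U U) / \<Phi>^2"
    by (rule upper_half[OF cur1 Phi condPhi vol th(1)])
  have u2: "Dfun w U (\<lambda>x. - v$x) (-\<theta>0) \<le> 4 * ln (volU w U U) / \<Phi>^2"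
    by (rule upper_half[OF cur2 Phi condPhi vol th2])
  have "edge_sumU w U v = Dfun w U (\<lambda>x. v$x) \<theta>0 + Dfun w U (\<lambda>x. - v$x) (-\<theta>0)"
    by (rule edge_sum_split[OF assms(1)])
  also have "\<dots> \<le> 8 * ln (volU w U U) / \<Phi>^2" using u1 u2 by simp
  finally show ?thesis unfolding v_def \<Phi>_def .
qed


end
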